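(* Let $B$ be an infinite-dimensional unital $\mathrm{C}^*$-algebra and $\phi$ a state on $B$ whose GNS representation is faithful. Then there is no constant $R>0$ such that $\|a^*a\|\le R\,\phi(a^*a)$ for all $a\in\ker\phi$. *)

theory Defs
  imports Complex_Main
begin

text \<open>The carrier is a type 'a that is a unital real Banach
algebra (class real_normed_algebra_1 + banach); the complex vector space structure is
given by an explicit scalar multiplication scaleC extending scaleR, and the
involution by star.\<close>

definition unital_cstar_algebra ::
  "(complex \<Rightarrow> 'a::{real_normed_algebra_1,banach} \<Rightarrow> 'a) \<Rightarrow> ('a \<Rightarrow> 'a) \<Rightarrow> bool" where
  "unital_cstar_algebra scaleC star \<longleftrightarrow>
     (\<forall>r a. scaleC (complex_of_real r) a = scaleR r a) \<and>
     (\<forall>c a b. scaleC c (a + b) = scaleC c a + scaleC c b) \<and>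
     (\<forall>c d a. scaleC (c + d) a = scaleC c a + scaleC d a) \<and>
     (\<forall>c d a. scaleC (c * d) a = scaleC c (scaleC d a)) \<and>
     (\<forall>a. scaleC 1 a = a) \<and>
     (\<forall>c a. norm (scaleC c a) = cmod c * norm a) \<and>
     (\<forall>c a b. scaleC c (a * b) = scaleC c a * b) \<and>
     (\<forall>c a b. scaleC c (a * b) = a * scaleC c b) \<and>
     (\<forall>a. star (star a) = a) \<and>
     (\<forall>a b. star (a + b) = star a + star b) \<and>
     (\<forall>c a. star (scaleC c a) = scaleC (cnj c) (star a)) \<and>
     (\<forall>a b. star (a * b) = star b * star a) \<and>
     (\<forall>a. norm (star a * a) = (norm a)\<^sup>2)"

definition complex_span ::
  "(complex \<Rightarrow> 'a::real_vector \<Rightarrow> 'a) \<Rightarrow> 'a set \<Rightarrow> 'a set" where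
  "complex_span scaleC S = {x. \<exists>c. x = (\<Sum>s\<in>S. scaleC (c s) s)}"

definition infinite_dimensional ::
  "(complex \<Rightarrow> 'a::real_vector \<Rightarrow> 'a) \<Rightarrow> bool" where
  "infinite_dimensional scaleC \<longleftrightarrow>
     (\<forall>S. finite S \<longrightarrow> complex_span scaleC S \<noteq> UNIV)"

definition is_state ::
  "(complex \<Rightarrow> 'a::{real_normed_algebra_1,banach} \<Rightarrow> 'a) \<Rightarrow> ('a \<Rightarrow> 'a) \<Rightarrow> ('a \<Rightarrow> complex) \<Rightarrow> bool" where
  "is_state scaleC star \<phi> \<longleftrightarrow>
     (\<forall>a b. \<phi> (a + b) = \<phi> a + \<phi> b) \<and>
     (\<forall>c a. \<phi> (scaleC c a) = c * \<phi> a) \<and>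
     (\<forall>a. Im (\<phi> (star a * a)) = 0 \<and> Re (\<phi> (star a * a)) \<ge> 0) \<and>
     \<phi> 1 = 1"

text \<open>The GNS pre-Hilbert space is B / N_phi with
N_phi = {x. phi(x* x) = 0} and inner product <[x],[y]> = phi(y* x);
pi_phi(a)[b] = [a b]. Hence pi_phi(a) = 0 (on the dense subspace, hence on the
completion) iff a b lies in N_phi for every b.\<close>

definition gns_null_space :: "('a \<Rightarrow> 'a) \<Rightarrow> ('a::ring \<Rightarrow> complex) \<Rightarrow> 'a set" where
  "gns_null_space star \<phi> = {x. \<phi> (star x * x) = 0}"

definition gns_kernel :: "('a \<Rightarrow> 'a) \<Rightarrow> ('a::ring \<Rightarrow> complex) \<Rightarrow> 'a set" where
  "gns_kernel star \<phi> = {a. \<forall>b. a * b \<in> gns_null_space star \<phi>}"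

definition gns_faithful :: "('a \<Rightarrow> 'a) \<Rightarrow> ('a::ring \<Rightarrow> complex) \<Rightarrow> bool" where
  "gns_faithful star \<phi> \<longleftrightarrow> gns_kernel star \<phi> = {0}"

end

theory Submission
  imports Defs "HOL-Analysis.Analysis"
begin

locale cs =
  fixes sc :: "complex \<Rightarrow> 'a::{real_normed_algebra_1,banach} \<Rightarrow> 'a"
    and st :: "'a \<Rightarrow> 'a"
    and ph :: "'a \<Rightarrow> complex"
  assumes C: "unital_cstar_algebra sc st"
    and S: "is_state sc st ph"
begin

lemma sc_real: "sc (complex_of_real r) a = r *\<^sub>R a" using C unfolding unital_cstar_algebra_def by metis
lemma sc_add: "sc c (a + b) = sc c a + sc c b" using C unfolding unital_cstar_algebra_def by metis
lemma sc_add_left: "sc (c + d) a = sc c a + sc d a" using C unfolding unital_cstar_algebra_def by metis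
lemma sc_sc: "sc c (sc d a) = sc (c * d) a" using C unfolding unital_cstar_algebra_def by metis
lemma sc_one: "sc 1 a = a" using C unfolding unital_cstar_algebra_def by metis
lemma norm_sc: "norm (sc c a) = cmod c * norm a" using C unfolding unital_cstar_algebra_def by metis
lemma sc_mult_left: "sc c a * b = sc c (a * b)" using C unfolding unital_cstar_algebra_def by metis
lemma sc_mult_right: "a * sc c b = sc c (a * b)" using C unfolding unital_cstar_algebra_def by metis
lemma st_st[simp]: "st (st a) = a" using C unfolding unital_cstar_algebra_def by metis
lemma st_add: "st (a + b) = st a + st b" using C unfolding unital_cstar_algebra_def by metis
lemma st_sc: "st (sc c a) = sc (cnj c) (st a)" using C unfolding unital_cstar_algebra_def by metis
lemma st_mult: "st (a * b) = st b * st a" using C unfolding unital_cstar_algebra_def by metis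
lemma cstar: "norm (st a * a) = (norm a)\<^sup>2" using C unfolding unital_cstar_algebra_def by metis

lemma ph_add: "ph (a + b) = ph a + ph b" using S unfolding is_state_def by metis
lemma ph_sc: "ph (sc c a) = c * ph a" using S unfolding is_state_def by metis
lemma ph_pos_im: "Im (ph (st a * a)) = 0" using S unfolding is_state_def by metis
lemma ph_pos: "Re (ph (st a * a)) \<ge> 0" using S unfolding is_state_def by metis
lemma ph_one: "ph 1 = 1" using S unfolding is_state_def by metis

lemma sc_zero_left[simp]: "sc 0 a = 0"
  using sc_real[of 0 a] by simp
lemma sc_zero[simp]: "sc c 0 = 0"
  using sc_add[of c 0 0] by simp
lemma sc_minus: "sc c (- a) = - sc c a"
  using sc_add[of c a "-a"] by (simp add: add_eq_0_iff)
lemma sc_diff: "sc c (a - b) = sc c a - sc c b"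
  using sc_add[of c a "-b"] sc_minus by simp
lemma sc_minus_left: "sc (- c) a = - sc c a"
  using sc_add_left[of c "-c" a] by (simp add: add_eq_0_iff)
lemma sc_diff_left: "sc (c - d) a = sc c a - sc d a"
  using sc_add_left[of c "-d" a] sc_minus_left by simp
lemma sc_of_real: "sc (of_real r) a = r *\<^sub>R a" by (rule sc_real)

lemma st_zero[simp]: "st 0 = 0"
  using st_add[of 0 0] by simp
lemma st_minus: "st (- a) = - st a"
  using st_add[of a "-a"] by (simp add: add_eq_0_iff)
lemma st_diff: "st (a - b) = st a - st b"
  using st_add[of a "-b"] st_minus by simp
lemma st_one[simp]: "st 1 = 1"
proof -
  have "st (st 1 * 1) = st 1 * st (st 1)" by (rule st_mult)
  hence "st (st 1) = st 1" by simp
  thus ?thesis by simp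
qed
lemma st_scaleR: "st (r *\<^sub>R a) = r *\<^sub>R st a"
  using st_sc[of "complex_of_real r" a] by (simp add: sc_real)
lemma st_power: "st (a ^ n) = (st a) ^ n"
  by (induction n) (simp_all add: st_mult power_commutes)

lemma norm_st[simp]: "norm (st a) = norm a"
proof -
  have A: "norm b \<le> norm (st b)" for b
  proof (cases "b = 0")
    case False
    have "(norm b)^2 \<le> norm (st b) * norm b" using cstar[of b] norm_mult_ineq[of "st b" b] by simp
    thus ?thesis using False by (simp add: power2_eq_square)
  qed simp
  show ?thesis using A[of a] A[of "st a"] by simp
qed

lemma st_sum: "st (sum f I) = sum (\<lambda>i. st (f i)) I"
  by (induction I rule: infinite_finite_induct) (simp_all add: st_add)

lemma bl_st: "bounded_linear st"
  by (rule bounded_linear_intro[where K=1]) (simp_all add: st_add st_scaleR)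

lemma sc_one_mult: "sc c 1 * a = sc c a" by (simp add: sc_mult_left)
lemma mult_sc_one: "a * sc c 1 = sc c a" by (simp add: sc_mult_right)

lemma ph_zero[simp]: "ph 0 = 0" using ph_add[of 0 0] by simp
lemma ph_minus: "ph (- a) = - ph a" using ph_add[of a "-a"] by (simp add: add_eq_0_iff)
lemma ph_diff: "ph (a - b) = ph a - ph b" using ph_add[of a "-b"] ph_minus by simp
lemma ph_scaleR: "ph (r *\<^sub>R a) = of_real r * ph a" using ph_sc[of "of_real r" a] by (simp add: sc_real)
lemma ph_sum: "ph (sum f I) = sum (\<lambda>i. ph (f i)) I"
  by (induction I rule: infinite_finite_induct) (simp_all add: ph_add)

lemma ph_st: "ph (st a) = cnj (ph a)"
proof -
  have e1: "st (1 + a) * (1 + a) = 1 + a + st a + st a * a"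
    by (simp add: st_add algebra_simps)
  have "Im (ph (st (1 + a) * (1 + a))) = 0" by (rule ph_pos_im)
  hence i1: "Im (ph a) + Im (ph (st a)) = 0"
    unfolding e1 using ph_pos_im[of a] by (simp add: ph_add ph_one)
  have s1: "st (1 + sc \<i> a) = 1 + sc (- \<i>) (st a)" by (simp add: st_add st_sc)
  have s2: "sc (- \<i>) (st a) * sc \<i> a = st a * a" by (simp add: sc_mult_left sc_mult_right sc_sc sc_one)
  have e2: "st (1 + sc \<i> a) * (1 + sc \<i> a) = 1 + sc \<i> a + sc (- \<i>) (st a) + st a * a"
    unfolding s1 using s2 by (simp add: algebra_simps)
  have "Im (ph (st (1 + sc \<i> a) * (1 + sc \<i> a))) = 0" by (rule ph_pos_im)
  hence i2: "Re (ph a) - Re (ph (st a)) = 0"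
    unfolding e2 using ph_pos_im[of a] by (simp add: ph_add ph_sc ph_one)
  show ?thesis using i1 i2 by (simp add: complex_eq_iff)
qed

lemma ph_sa_real: "st a = a \<Longrightarrow> Im (ph a) = 0"
  using ph_st[of a] by (metis cnj.simps(2) neg_equal_zero)

lemma sqrt_ex:
  assumes sa: "st x = x" and nx: "norm x < 1"
  shows "\<exists>s. st s = s \<and> s * s = 1 - x"
proof -
  define r where "r = 1 - sqrt (1 - norm x)"
  have sq: "sqrt (1 - norm x) > 0" using nx by simp
  have sq1: "sqrt (1 - norm x) \<le> 1" using nx by simp
  have r0: "0 \<le> r" and r1: "r < 1" using sq sq1 by (auto simp: r_def)
  have rr: "(norm x + r * r) / 2 = r"
  proof -
    define w where "w = sqrt (1 - norm x)"
    have ww: "w * w = 1 - norm x" using nx unfolding w_def by (simp flip: power2_eq_square)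
    have "(1 - w) * (1 - w) = 1 - 2 * w + w * w" by algebra
    hence "(norm x + (1 - w) * (1 - w)) / 2 = 1 - w" using ww by simp
    thus ?thesis unfolding r_def w_def by simp
  qed
  define F where "F t = (1/2) *\<^sub>R (x + t * t)" for t
  have Fst: "F (st t) = st (F t)" for t
    by (simp add: F_def st_scaleR st_add st_mult sa)
  have Fin: "F ` cball 0 r \<subseteq> cball 0 r"
  proof
    fix y assume "y \<in> F ` cball 0 r"
    then obtain t where t: "norm t \<le> r" "y = F t" by auto
    have "norm (t * t) \<le> r * r"
      using norm_mult_ineq[of t t] mult_mono[OF t(1) t(1)] r0 by (meson norm_ge_zero order_trans)
    hence "norm (x + t * t) \<le> norm x + r * r" using norm_triangle_ineq[of x "t*t"] by linarith
    hence "norm y \<le> (norm x + r * r) / 2" using t(2) by (simp add: F_def)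
    thus "y \<in> cball 0 r" using rr by simp
  qed
  have Lip: "dist (F t) (F u) \<le> r * dist t u" if "t \<in> cball 0 r" "u \<in> cball 0 r" for t u
  proof -
    have nt: "norm t \<le> r" and nu: "norm u \<le> r" using that by auto
    have "F t - F u = (1/2) *\<^sub>R (t * (t - u) + (t - u) * u)"
      by (simp add: F_def algebra_simps scaleR_diff_right)
    hence "norm (F t - F u) = (1/2) * norm (t * (t - u) + (t - u) * u)" by simp
    also have "\<dots> \<le> (1/2) * (norm t * norm (t - u) + norm (t - u) * norm u)"
    proof -
      have "norm (t * (t - u) + (t - u) * u) \<le> norm t * norm (t - u) + norm (t - u) * norm u"
        using norm_triangle_ineq[of "t * (t - u)" "(t - u) * u"] norm_mult_ineq[of t "t - u"]
          norm_mult_ineq[of "t - u" u] by linarith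
      thus ?thesis by simp
    qed
    also have "\<dots> \<le> (1/2) * (r * norm (t - u) + norm (t - u) * r)"
      using mult_right_mono[OF nt, of "norm (t-u)"] mult_left_mono[OF nu, of "norm (t-u)"]
      by (simp add: mult.commute)
    also have "\<dots> = r * norm (t - u)" by simp
    finally show ?thesis by (simp add: dist_norm)
  qed
  have "\<exists>!t\<in>cball 0 r. F t = t"
    by (rule Banach_fix[OF _ _ r0 r1 Fin Lip]) (use r0 in \<open>auto simp: complete_eq_closed\<close>)
  then obtain t where t: "t \<in> cball 0 r" "F t = t" and uq: "\<And>u. u \<in> cball 0 r \<Longrightarrow> F u = u \<Longrightarrow> u = t"
    by blast
  have "st t \<in> cball 0 r" using t(1) by simp
  moreover have "F (st t) = st t" using Fst t(2) by simp
  ultimately have stt: "st t = t" using uq by blast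
  have tt: "t * t = 2 *\<^sub>R t - x"
  proof -
    have "(1/2) *\<^sub>R (x + t * t) = t" using t(2) by (simp add: F_def)
    hence "2 *\<^sub>R ((1/2) *\<^sub>R (x + t * t)) = 2 *\<^sub>R t" by simp
    hence "x + t * t = 2 *\<^sub>R t" by simp
    thus ?thesis by (simp add: algebra_simps)
  qed
  show ?thesis
  proof (intro exI conjI)
    show "st (1 - t) = 1 - t" by (simp add: st_diff stt)
    have "(1 - t) * (1 - t) = 1 - 2 *\<^sub>R t + t * t" by (simp add: algebra_simps scaleR_2)
    thus "(1 - t) * (1 - t) = 1 - x" using tt by simp
  qed
qed

lemma pos_bound:
  assumes sa: "st x = x"
  shows "Re (ph (st y * x * y)) \<le> norm x * Re (ph (st y * y))"
proof -
  define P where "P = Re (ph (st y * y))"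
  have P0: "P \<ge> 0" unfolding P_def by (rule ph_pos)
  have cb: "Re (ph (st y * x * y)) \<le> c * P" if c: "c > norm x" for c
  proof -
    have cpos: "c > 0" using c norm_ge_zero[of x] by linarith
    define x' where "x' = (1/c) *\<^sub>R x"
    have "st x' = x'" by (simp add: x'_def st_scaleR sa)
    moreover have "norm x' < 1" using c cpos by (simp add: x'_def)
    ultimately obtain s where s: "st s = s" "s * s = 1 - x'" using sqrt_ex by blast
    have "st (s * y) * (s * y) = st y * y - (1/c) *\<^sub>R (st y * x * y)"
    proof -
      have "st (s * y) * (s * y) = st y * (s * s) * y" by (simp add: st_mult s(1) mult.assoc)
      also have "\<dots> = st y * y - (1/c) *\<^sub>R (st y * x * y)"
        unfolding s(2) x'_def by (simp add: algebra_simps)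
      finally show ?thesis .
    qed
    hence "Re (ph (st y * y - (1/c) *\<^sub>R (st y * x * y))) \<ge> 0" using ph_pos[of "s * y"] by simp
    hence "P - (1/c) * Re (ph (st y * x * y)) \<ge> 0" by (simp add: ph_diff ph_scaleR P_def)
    hence "(1/c) * Re (ph (st y * x * y)) \<le> P" by simp
    thus ?thesis using cpos by (simp add: pos_divide_le_eq mult.commute)
  qed
  show ?thesis
  proof (cases "P = 0")
    case True
    thus ?thesis using cb[of "norm x + 1"] by (simp add: P_def)
  next
    case False
    hence Pp: "P > 0" using P0 by simp
    have "Re (ph (st y * x * y)) / P \<le> norm x"
    proof (rule dense_ge)
      fix c assume "norm x < c"
      thus "Re (ph (st y * x * y)) / P \<le> c" using cb[of c] Pp by (simp add: divide_le_eq)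
    qed
    thus ?thesis using Pp by (simp add: divide_le_eq P_def mult.commute)
  qed
qed

lemma kbound:
  assumes R: "R > 0" "\<forall>a. ph a = 0 \<longrightarrow> norm (st a * a) \<le> R * Re (ph (st a * a))"
  shows "(norm a)^2 \<le> (sqrt R + 1)^2 * Re (ph (st a * a))"
proof -
  define c where "c = ph a"
  define b where "b = a - sc c 1"
  define t where "t = Re (ph (st a * a))"
  have t0: "t \<ge> 0" unfolding t_def by (rule ph_pos)
  have phb: "ph b = 0" by (simp add: b_def ph_diff ph_sc ph_one c_def)
  have stb: "st b = st a - sc (cnj c) 1" by (simp add: b_def st_diff st_sc)
  have bb: "st b * b = st a * a - sc c (st a) - sc (cnj c) a + sc (cnj c * c) 1"
    unfolding stb unfolding b_def by (simp add: algebra_simps mult_sc_one sc_one_mult sc_mult_left sc_sc sc_diff)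
  have "ph (st b * b) = ph (st a * a) - c * cnj c - cnj c * c + cnj c * c"
    unfolding bb by (simp add: ph_add ph_diff ph_sc ph_one ph_st c_def)
  hence "Re (ph (st b * b)) = t - (cmod c)^2"
    using cmod_power2[of c] by (simp add: t_def power2_eq_square)
  hence ineq: "(cmod c)^2 \<le> t" and bt: "Re (ph (st b * b)) \<le> t" using ph_pos[of b] by auto
  have "(norm b)^2 \<le> R * t"
    using R(2) phb bt R(1) cstar[of b] by (metis mult_left_mono less_imp_le order_trans)
  hence nb: "norm b \<le> sqrt R * sqrt t"
    by (metis real_le_rsqrt real_sqrt_mult)
  have nc: "cmod c \<le> sqrt t" using ineq by (simp add: real_le_rsqrt)
  have "a = b + sc c 1" by (simp add: b_def)
  hence "norm a \<le> norm b + cmod c" using norm_triangle_ineq[of b "sc c 1"] by (simp add: norm_sc)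
  hence na: "norm a \<le> (sqrt R + 1) * sqrt t" using nb nc by (simp add: algebra_simps)
  have "(norm a)^2 \<le> ((sqrt R + 1) * sqrt t)^2"
    by (rule power_mono[OF na norm_ge_zero])
  also have "\<dots> = (sqrt R + 1)^2 * t" using t0 by (simp add: power_mult_distrib)
  finally show ?thesis by (simp add: t_def)
qed

end

locale cs2 = cs +
  fixes K :: real
  assumes Kpos: "K > 0"
    and Kb: "(norm a)^2 \<le> K * Re (ph (st a * a))"
begin

lemma limproj:
  assumes sah: "st h = h" and nh: "norm h = 1"
  shows "\<exists>q'. q' \<noteq> 0 \<and> st q' = q' \<and> q' * q' = q' \<and> (h * h) * q' = q' \<and>
           (\<forall>q. q * (h * h) = h * h \<longrightarrow> q * q' = q')"
proof -
  define p where "p = h * h"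
  have stp: "st p = p" by (simp add: p_def st_mult sah)
  have np: "norm p = 1" using cstar[of h] nh by (simp add: p_def sah)
  have stpn: "st (p ^ n) = p ^ n" for n by (simp add: st_power stp)
  have phn: "p ^ n = st (h ^ n) * h ^ n" for n
  proof -
    have "p ^ n = h ^ (2 * n)" by (simp add: p_def power_mult power2_eq_square)
    also have "\<dots> = h ^ n * h ^ n" by (simp add: mult_2 power_add)
    finally show ?thesis by (simp add: st_power sah)
  qed
  have phs: "p ^ Suc n = st (h ^ n) * p * h ^ n" for n
  proof -
    have "h ^ n * p = p * h ^ n" unfolding p_def
      by (metis power_commutes mult.assoc)
    hence "st (h ^ n) * p * h ^ n = p * (st (h ^ n) * h ^ n)"
      by (simp add: st_power sah mult.assoc)
    thus ?thesis using phn[of n] by simp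
  qed
  define a where "a n = Re (ph (p ^ n))" for n
  have a0: "a n \<ge> 0" for n using ph_pos[of "h ^ n"] phn[of n] by (simp add: a_def)
  have adec: "a (Suc n) \<le> a n" for n
    using pos_bound[OF stp, of "h ^ n"] phs[of n] phn[of n] np by (simp add: a_def)
  have "decseq a" by (rule decseq_SucI) (use adec in auto)
  then obtain L where aL: "a \<longlonglongrightarrow> L" using decseq_convergent[of a 0] a0 by blast
  have ppow: "p ^ m * p ^ n = p ^ (m + n)" for m n by (simp add: power_add)
  have dd: "(norm (p ^ m - p ^ n))^2 \<le> K * (a (m + m) - 2 * a (m + n) + a (n + n))" for m n
  proof -
    have "st (p ^ m - p ^ n) * (p ^ m - p ^ n) = p ^ (m + m) - 2 *\<^sub>R p ^ (m + n) + p ^ (n + n)"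
      by (simp add: st_diff stpn algebra_simps ppow scaleR_2 add.commute)
    hence "Re (ph (st (p ^ m - p ^ n) * (p ^ m - p ^ n))) = a (m + m) - 2 * a (m + n) + a (n + n)"
      by (simp add: ph_add ph_diff ph_scaleR a_def)
    thus ?thesis using Kb[of "p ^ m - p ^ n"] by simp
  qed
  have "Cauchy (\<lambda>n. p ^ n)"
  proof (rule CauchyI)
    fix e :: real assume e: "e > 0"
    define d where "d = e^2 / (4 * K)"
    have d: "d > 0" using e Kpos by (simp add: d_def)
    obtain M where M: "\<And>k. k \<ge> M \<Longrightarrow> \<bar>a k - L\<bar> < d"
      using aL d unfolding LIMSEQ_iff by (metis real_norm_def)
    have "norm (p ^ m - p ^ n) < e" if "m \<ge> M" "n \<ge> M" for m n
    proof -
      have "a (m + m) - 2 * a (m + n) + a (n + n) < 4 * d"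
        using M[of "m + m"] M[of "m + n"] M[of "n + n"] that by auto
      hence "K * (a (m + m) - 2 * a (m + n) + a (n + n)) < K * (4 * d)"
        using Kpos by simp
      also have "\<dots> = e^2" using Kpos by (simp add: d_def)
      finally have "(norm (p ^ m - p ^ n))^2 < e^2" using dd[of m n] by linarith
      thus ?thesis using e by (simp add: power_less_imp_less_base)
    qed
    thus "\<exists>M. \<forall>m\<ge>M. \<forall>n\<ge>M. norm (p ^ m - p ^ n) < e" by blast
  qed
  then obtain q' where lim: "(\<lambda>n. p ^ n) \<longlonglongrightarrow> q'"
    using Cauchy_convergent_iff convergent_def by blast
  have limS: "(\<lambda>n. p ^ Suc n) \<longlonglongrightarrow> q'" using LIMSEQ_Suc[OF lim] .
  have "(\<lambda>n. st (p ^ n)) \<longlonglongrightarrow> st q'" by (rule bounded_linear.tendsto[OF bl_st lim])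
  hence st': "st q' = q'" using lim LIMSEQ_unique stpn by simp
  have "(\<lambda>n. p ^ n * p ^ n) \<longlonglongrightarrow> q' * q'" by (rule tendsto_mult[OF lim lim])
  moreover have "(\<lambda>n. p ^ n * p ^ n) = (\<lambda>n. p ^ n) \<circ> (\<lambda>n. 2 * n)"
    by (auto simp: ppow mult_2)
  moreover have "((\<lambda>n. p ^ n) \<circ> (\<lambda>n. 2 * n)) \<longlonglongrightarrow> q'"
    by (rule LIMSEQ_subseq_LIMSEQ[OF lim]) (simp add: strict_mono_def)
  ultimately have idem: "q' * q' = q'" using LIMSEQ_unique by metis
  have "(\<lambda>n. p * p ^ n) \<longlonglongrightarrow> p * q'" by (rule tendsto_mult[OF tendsto_const lim])
  hence pq: "p * q' = q'" using limS LIMSEQ_unique by simp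
  have qq: "q * q' = q'" if "q * p = p" for q
  proof -
    have "(\<lambda>n. q * p ^ Suc n) \<longlonglongrightarrow> q * q'" by (rule tendsto_mult[OF tendsto_const limS])
    moreover have "q * p ^ Suc n = p ^ Suc n" for n using that by (simp add: mult.assoc[symmetric])
    ultimately show ?thesis using limS LIMSEQ_unique by simp
  qed
  have n2: "norm (p ^ (2 ^ k)) = 1" for k
  proof (induction k)
    case 0 thus ?case using np by simp
  next
    case (Suc k)
    have "p ^ (2 ^ Suc k) = st (p ^ (2 ^ k)) * p ^ (2 ^ k)"
      by (simp add: stpn ppow mult_2)
    thus ?case using cstar[of "p ^ (2 ^ k)"] Suc by simp
  qed
  have nz: "q' \<noteq> 0"
  proof
    assume "q' = 0"
    hence "(\<lambda>n. p ^ n) \<longlonglongrightarrow> 0" using lim by simp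
    then obtain M where "\<And>n. n \<ge> M \<Longrightarrow> norm (p ^ n) < 1"
      unfolding LIMSEQ_iff by (metis diff_zero zero_less_one)
    hence "norm (p ^ (2 ^ M)) < 1" using less_exp[of M] by simp
    thus False using n2 by simp
  qed
  show ?thesis using nz st' idem pq qq unfolding p_def by blast
qed

lemma split:
  assumes q: "st q = q" "q * q = q" and k: "st k = k" "q * k = k" "k * q = k"
    and nk: "\<forall>r. k \<noteq> r *\<^sub>R q"
  shows "\<exists>e1 e2. st e1 = e1 \<and> e1 * e1 = e1 \<and> e1 \<noteq> 0 \<and> st e2 = e2 \<and> e2 * e2 = e2 \<and> e2 \<noteq> 0
            \<and> e1 + e2 = q \<and> e1 * e2 = 0"
proof -
  have k0: "k \<noteq> 0" using nk[rule_format, of 0] by simp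
  define h where "h = (1 / norm k) *\<^sub>R k"
  have sah: "st h = h" by (simp add: h_def st_scaleR k(1))
  have nh: "norm h = 1" using k0 by (simp add: h_def)
  have qh: "q * h = h" and hq: "h * q = h" using k(2,3) by (simp_all add: h_def)
  have kh: "k = norm k *\<^sub>R h" using k0 by (simp add: h_def)
  have "q * (h * h) = h * h" using qh by (simp add: mult.assoc[symmetric])
  then obtain q' where q': "q' \<noteq> 0" "st q' = q'" "q' * q' = q'" "(h * h) * q' = q'" "q * q' = q'"
    using limproj[OF sah nh] by blast
  have q'q: "q' * q = q'" using arg_cong[OF q'(5), of st] by (simp add: st_mult q(1) q'(2))
  show ?thesis
  proof (cases "q' = q")
    case False
    show ?thesis
    proof (intro exI conjI)
      show "st q' = q'" "q' * q' = q'" "q' \<noteq> 0" by (fact q')+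
      show "st (q - q') = q - q'" by (simp add: st_diff q(1) q'(2))
      show "(q - q') * (q - q') = q - q'" by (simp add: algebra_simps q(2) q'(3,5) q'q)
      show "q - q' \<noteq> 0" using False by simp
      show "q' + (q - q') = q" by simp
      show "q' * (q - q') = 0" by (simp add: algebra_simps q'(3) q'q)
    qed
  next
    case True
    have hh: "h * h = q" using q'(4) True hq by (simp add: mult.assoc)
    show ?thesis
    proof (intro exI conjI)
      show "st ((1/2) *\<^sub>R (q + h)) = (1/2) *\<^sub>R (q + h)" by (simp add: st_scaleR st_add q(1) sah)
      show "st ((1/2) *\<^sub>R (q - h)) = (1/2) *\<^sub>R (q - h)" by (simp add: st_scaleR st_diff q(1) sah)
      have "(q + h) * (q + h) = 2 *\<^sub>R (q + h)" by (simp add: algebra_simps q(2) qh hq hh scaleR_2)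
      thus "(1/2) *\<^sub>R (q + h) * ((1/2) *\<^sub>R (q + h)) = (1/2) *\<^sub>R (q + h)"
        by simp
      have "(q - h) * (q - h) = 2 *\<^sub>R (q - h)" by (simp add: algebra_simps q(2) qh hq hh scaleR_2)
      thus "(1/2) *\<^sub>R (q - h) * ((1/2) *\<^sub>R (q - h)) = (1/2) *\<^sub>R (q - h)"
        by simp
      show "(1/2) *\<^sub>R (q + h) + (1/2) *\<^sub>R (q - h) = q"
        by (simp add: algebra_simps scaleR_2[symmetric])
      show "(1/2) *\<^sub>R (q + h) * ((1/2) *\<^sub>R (q - h)) = 0"
        by (simp add: algebra_simps q(2) qh hq hh)
      show "(1/2) *\<^sub>R (q + h) \<noteq> 0"
      proof
        assume "(1/2) *\<^sub>R (q + h) = 0"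
        hence "h = - q" by (simp add: add_eq_0_iff)
        hence "k = (- norm k) *\<^sub>R q" using kh by simp
        thus False using nk by blast
      qed
      show "(1/2) *\<^sub>R (q - h) \<noteq> 0"
      proof
        assume "(1/2) *\<^sub>R (q - h) = 0"
        hence "h = q" by simp
        hence "k = norm k *\<^sub>R q" using kh by simp
        thus False using nk by blast
      qed
    qed
  qed
qed

definition fam :: "'a set \<Rightarrow> bool" where
  "fam F \<longleftrightarrow> finite F \<and> (\<forall>p\<in>F. st p = p \<and> p * p = p \<and> p \<noteq> 0) \<and>
     (\<forall>p\<in>F. \<forall>p'\<in>F. p \<noteq> p' \<longrightarrow> p * p' = 0) \<and> sum (\<lambda>x. x) F = 1"

lemma proj_norm: assumes "st p = p" "p * p = p" "p \<noteq> 0" shows "norm p = 1"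
proof -
  have "norm p = (norm p)^2" using cstar[of p] assms by simp
  thus ?thesis using assms(3) by (simp add: power2_eq_square)
qed

lemma fam_card: assumes "fam F" shows "real (card F) \<le> K"
proof -
  have fin: "finite F" using assms by (simp add: fam_def)
  have lb: "1 / K \<le> Re (ph p)" if "p \<in> F" for p
  proof -
    have pp: "st p = p" "p * p = p" "p \<noteq> 0" using assms that by (auto simp: fam_def)
    have "1 \<le> K * Re (ph p)" using Kb[of p] proj_norm[OF pp] pp by simp
    thus ?thesis using Kpos by (simp add: divide_le_eq mult.commute)
  qed
  have "(\<Sum>p\<in>F. Re (ph p)) = Re (ph (sum (\<lambda>x. x) F))" by (simp add: ph_sum)
  also have "\<dots> = 1" using assms by (simp add: fam_def ph_one)
  finally have s1: "(\<Sum>p\<in>F. Re (ph p)) = 1" .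
  have "(\<Sum>p\<in>F. 1 / K) \<le> (\<Sum>p\<in>F. Re (ph p))" by (rule sum_mono) (use lb in auto)
  hence "real (card F) / K \<le> 1" using s1 by simp
  thus ?thesis using Kpos by (simp add: divide_le_eq)
qed

lemma fam_one: "fam {1}"
proof -
  have "(1::'a) \<noteq> 0" using norm_one[where 'a='a] by (metis norm_zero zero_neq_one)
  thus ?thesis by (simp add: fam_def)
qed

lemma max_fam: "\<exists>F. fam F \<and> (\<forall>G. fam G \<longrightarrow> card G \<le> card F)"
proof -
  have "\<forall>G. fam G \<longrightarrow> card G < nat \<lceil>K\<rceil> + 1"
  proof (intro allI impI)
    fix G assume "fam G"
    hence "real (card G) \<le> real (nat \<lceil>K\<rceil>)" using fam_card real_nat_ceiling_ge order_trans by blast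
    thus "card G < nat \<lceil>K\<rceil> + 1" by linarith
  qed
  thus ?thesis using ex_has_greatest_nat[of fam "{1}" card "nat \<lceil>K\<rceil> + 1"] fam_one by blast
qed

lemma max_nosplit:
  assumes F: "fam F" and mx: "\<forall>G. fam G \<longrightarrow> card G \<le> card F" and qF: "q \<in> F"
    and k: "st k = k" "q * k = k" "k * q = k"
  shows "\<exists>r. k = r *\<^sub>R q"
proof (rule ccontr)
  assume "\<not> ?thesis"
  hence nk: "\<forall>r. k \<noteq> r *\<^sub>R q" by blast
  have fin: "finite F" and pr: "\<And>p. p \<in> F \<Longrightarrow> st p = p \<and> p * p = p \<and> p \<noteq> 0"
    and orth: "\<And>p p'. p \<in> F \<Longrightarrow> p' \<in> F \<Longrightarrow> p \<noteq> p' \<Longrightarrow> p * p' = 0"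
    and sF: "sum (\<lambda>x. x) F = 1" using F unfolding fam_def by blast+
  have q: "st q = q" "q * q = q" using pr[OF qF] by auto
  obtain e1 e2 where e: "st e1 = e1" "e1 * e1 = e1" "e1 \<noteq> 0" "st e2 = e2" "e2 * e2 = e2" "e2 \<noteq> 0"
    "e1 + e2 = q" "e1 * e2 = 0"
    using split[OF q k nk] by blast
  have e21: "e2 * e1 = 0" using arg_cong[OF e(8), of st] by (simp add: st_mult e(1,4))
  have qe1: "q * e1 = e1" and e1q: "e1 * q = e1" and qe2: "q * e2 = e2" and e2q: "e2 * q = e2"
    unfolding e(7)[symmetric] by (simp_all add: algebra_simps e(2,5,8) e21)
  have po1: "p * e1 = 0" "e1 * p = 0" if "p \<in> F" "p \<noteq> q" for p
  proof -
    have "p * e1 = (p * q) * e1" by (simp add: mult.assoc qe1)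
    thus "p * e1 = 0" using orth[OF that(1) qF that(2)] by simp
    have "e1 * p = e1 * (q * p)" by (simp add: mult.assoc[symmetric] e1q)
    thus "e1 * p = 0" using orth[OF qF that(1)] that(2) by simp
  qed
  have po2: "p * e2 = 0" "e2 * p = 0" if "p \<in> F" "p \<noteq> q" for p
  proof -
    have "p * e2 = (p * q) * e2" by (simp add: mult.assoc qe2)
    thus "p * e2 = 0" using orth[OF that(1) qF that(2)] by simp
    have "e2 * p = e2 * (q * p)" by (simp add: mult.assoc[symmetric] e2q)
    thus "e2 * p = 0" using orth[OF qF that(1)] that(2) by simp
  qed
  have n1: "e1 \<notin> F - {q}"
  proof
    assume "e1 \<in> F - {q}"
    hence "e1 * e1 = 0" using po1[of e1] by auto
    thus False using e(2,3) by simp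
  qed
  have n2: "e2 \<notin> F - {q}"
  proof
    assume "e2 \<in> F - {q}"
    hence "e2 * e2 = 0" using po2[of e2] by auto
    thus False using e(5,6) by simp
  qed
  have n12: "e1 \<noteq> e2" using e(2,3,8) by auto
  define G where "G = insert e1 (insert e2 (F - {q}))"
  have finG: "finite G" using fin by (simp add: G_def)
  have cardG: "card G = card F + 1"
  proof -
    have "card G = Suc (Suc (card (F - {q})))" using n1 n2 n12 fin by (simp add: G_def)
    moreover have "card (F - {q}) = card F - 1" using qF fin by (simp add: card_Diff_singleton)
    moreover have "card F > 0" using qF fin card_gt_0_iff by blast
    ultimately show ?thesis by simp
  qed
  have "sum (\<lambda>x. x) G = e1 + (e2 + sum (\<lambda>x. x) (F - {q}))" using n1 n2 n12 fin by (simp add: G_def)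
  also have "\<dots> = q + sum (\<lambda>x. x) (F - {q})" using e(7) by (simp add: add.assoc)
  also have "\<dots> = sum (\<lambda>x. x) F" using fin qF by (simp add: sum.remove)
  finally have sG: "sum (\<lambda>x. x) G = 1" using sF by simp
  have "fam G"
    unfolding fam_def
  proof (intro conjI)
    show "finite G" by (fact finG)
    show "\<forall>p\<in>G. st p = p \<and> p * p = p \<and> p \<noteq> 0" using e pr by (auto simp: G_def)
    show "\<forall>p\<in>G. \<forall>p'\<in>G. p \<noteq> p' \<longrightarrow> p * p' = 0"
      unfolding G_def using e(8) e21 po1 po2 orth by auto
    show "sum (\<lambda>x. x) G = 1" by (fact sG)
  qed
  hence "card G \<le> card F" using mx by blast
  thus False using cardG by simp
qed

lemma corner_scalar:
  assumes F: "fam F" and mx: "\<forall>G. fam G \<longrightarrow> card G \<le> card F" and qF: "q \<in> F"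
    and x: "q * x = x" "x * q = x"
  shows "\<exists>c. x = sc c q"
proof -
  have q: "st q = q" "q * q = q" using F qF by (auto simp: fam_def)
  have qsx: "q * st x = st x" using arg_cong[OF x(2), of st] by (simp add: st_mult q(1))
  have sxq: "st x * q = st x" using arg_cong[OF x(1), of st] by (simp add: st_mult q(1))
  define re where "re = (1/2) *\<^sub>R (x + st x)"
  define im where "im = sc (\<i>/2) (st x - x)"
  have "st re = re" by (simp add: re_def st_scaleR st_add add.commute)
  moreover have "q * re = re" "re * q = re" by (simp_all add: re_def algebra_simps x qsx sxq)
  ultimately obtain r1 where r1: "re = r1 *\<^sub>R q" using max_nosplit[OF F mx qF] by blast
  have cj: "cnj (\<i>/2) = - (\<i>/2)" by (simp add: complex_eq_iff)
  have "st im = sc (- (\<i>/2)) (x - st x)" by (simp add: im_def st_sc st_diff cj)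
  also have "\<dots> = im" unfolding im_def by (simp add: sc_minus_left sc_diff)
  finally have "st im = im" .
  moreover have "q * im = im" "im * q = im"
    by (simp_all add: im_def sc_mult_left sc_mult_right algebra_simps x qsx sxq)
  ultimately obtain r2 where r2: "im = r2 *\<^sub>R q" using max_nosplit[OF F mx qF] by blast
  have ii: "\<i> * (\<i>/2) = complex_of_real (-1/2)" by (simp add: complex_eq_iff)
  have "sc \<i> im = (-1/2) *\<^sub>R (st x - x)" unfolding im_def sc_sc ii sc_real by simp
  hence sx: "sc \<i> im = (1/2) *\<^sub>R x - (1/2) *\<^sub>R st x" by (simp add: algebra_simps)
  have "re + sc \<i> im = (1/2 + 1/2) *\<^sub>R x"
    unfolding re_def sx scaleR_add_right scaleR_add_left by (simp add: algebra_simps)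
  hence "x = re + sc \<i> im" by simp
  also have "\<dots> = sc (complex_of_real r1 + \<i> * complex_of_real r2) q"
    by (simp add: r1 r2 sc_add_left sc_sc sc_real[symmetric])
  finally show ?thesis by blast
qed

end

context cs
begin

lemma dim1:
  assumes p: "st p = p" "p * p = p" and q: "st q = q" "q * q = q"
    and hp: "\<And>x. p * x = x \<Longrightarrow> x * p = x \<Longrightarrow> \<exists>c. x = sc c p"
    and hq: "\<And>x. q * x = x \<Longrightarrow> x * q = x \<Longrightarrow> \<exists>c. x = sc c q"
  shows "\<exists>y. \<forall>x. p * x = x \<and> x * q = x \<longrightarrow> (\<exists>c. x = sc c y)"
proof (cases "\<forall>x. p * x = x \<and> x * q = x \<longrightarrow> x = 0")
  case True
  thus ?thesis by (metis sc_zero)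
next
  case False
  then obtain y where y: "p * y = y" "y * q = y" "y \<noteq> 0" by blast
  have qsy: "q * st y = st y" using arg_cong[OF y(2), of st] by (simp add: st_mult q(1))
  have "\<exists>c. x = sc c y" if x: "p * x = x" "x * q = x" for x
  proof -
    have "q * (st y * x) = st y * x" by (simp add: mult.assoc[symmetric] qsy)
    moreover have "(st y * x) * q = st y * x" by (simp add: mult.assoc x(2))
    ultimately obtain l where l: "st y * x = sc l q" using hq by blast
    have "q * (st y * y) = st y * y" by (simp add: mult.assoc[symmetric] qsy)
    moreover have "(st y * y) * q = st y * y" by (simp add: mult.assoc y(2))
    ultimately obtain m where m: "st y * y = sc m q" using hq by blast
    have m0: "m \<noteq> 0"
    proof
      assume "m = 0"
      hence "(norm y)^2 = 0" using cstar[of y] m by simp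
      thus False using y(3) by simp
    qed
    define z where "z = x - sc (l / m) y"
    have yz: "st y * z = 0"
      unfolding z_def using m0 by (simp add: algebra_simps sc_mult_right l m sc_diff sc_sc)
    have pz: "p * z = z" by (simp add: z_def algebra_simps sc_mult_right x(1) y(1))
    have szp: "st z * p = st z" using arg_cong[OF pz, of st] by (simp add: st_mult p(1))
    have "p * (z * st z) = z * st z" by (simp add: mult.assoc[symmetric] pz)
    moreover have "(z * st z) * p = z * st z" by (simp add: mult.assoc szp)
    ultimately obtain al where al: "z * st z = sc al p" using hp by blast
    have szy: "st z * y = 0" using arg_cong[OF yz, of st] by (simp add: st_mult)
    have "(z * st z) * y = 0" by (simp add: mult.assoc szy)
    hence "sc al y = 0" using al by (simp add: sc_mult_left y(1))
    hence "al = 0" using y(3) norm_sc[of al y] by simp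
    hence "norm (st (st z) * st z) = 0" using al by simp
    hence "norm (st z) = 0" using cstar[of "st z"] by simp
    hence "z = 0" by (metis norm_eq_zero st_st st_zero)
    thus ?thesis unfolding z_def by auto
  qed
  thus ?thesis by blast
qed

lemma span_zero: "0 \<in> complex_span sc Y"
  unfolding complex_span_def by (rule CollectI, rule exI[of _ "\<lambda>_. 0"]) simp

lemma span_add: "x \<in> complex_span sc Y \<Longrightarrow> z \<in> complex_span sc Y \<Longrightarrow> x + z \<in> complex_span sc Y"
  unfolding complex_span_def
proof (clarify)
  fix c d
  show "\<exists>e. (\<Sum>s\<in>Y. sc (c s) s) + (\<Sum>s\<in>Y. sc (d s) s) = (\<Sum>s\<in>Y. sc (e s) s)"
    by (rule exI[of _ "\<lambda>s. c s + d s"]) (simp add: sc_add_left sum.distrib)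
qed

lemma span_elem: assumes "finite Y" "y \<in> Y" shows "sc c y \<in> complex_span sc Y"
  unfolding complex_span_def
proof (rule CollectI, rule exI[of _ "\<lambda>s. if s = y then c else 0"])
  have "(\<Sum>s\<in>Y. sc (if s = y then c else 0) s) = (\<Sum>s\<in>Y. if s = y then sc c s else 0)"
    by (rule sum.cong) auto
  also have "\<dots> = sc c y" using assms by (simp add: sum.delta)
  finally show "sc c y = (\<Sum>s\<in>Y. sc (if s = y then c else 0) s)" by simp
qed

lemma span_sum: "(\<And>i. i \<in> I \<Longrightarrow> f i \<in> complex_span sc Y) \<Longrightarrow> sum f I \<in> complex_span sc Y"
  by (induction I rule: infinite_finite_induct) (simp_all add: span_zero span_add)

end

context cs2
begin

lemma fin_dim: "\<exists>Y. finite Y \<and> (\<forall>a. a \<in> complex_span sc Y)"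
proof -
  obtain F where F: "fam F" and mx: "\<forall>G. fam G \<longrightarrow> card G \<le> card F" using max_fam by blast
  have fin: "finite F" and pr: "\<And>p. p \<in> F \<Longrightarrow> st p = p \<and> p * p = p"
    and sF: "sum (\<lambda>x. x) F = 1" using F unfolding fam_def by blast+
  have "\<forall>p\<in>F. \<forall>q\<in>F. \<exists>y. \<forall>x. p * x = x \<and> x * q = x \<longrightarrow> (\<exists>c. x = sc c y)"
  proof (intro ballI)
    fix p q assume pF: "p \<in> F" and qF: "q \<in> F"
    show "\<exists>y. \<forall>x. p * x = x \<and> x * q = x \<longrightarrow> (\<exists>c. x = sc c y)"
      by (rule dim1) (use pr[OF pF] pr[OF qF] corner_scalar[OF F mx pF] corner_scalar[OF F mx qF] in auto)
  qed
  then obtain yf where yf: "\<And>p q x. p \<in> F \<Longrightarrow> q \<in> F \<Longrightarrow> p * x = x \<Longrightarrow> x * q = x \<Longrightarrow> \<exists>c. x = sc c (yf p q)"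
    by metis
  define Y where "Y = (\<lambda>(p, q). yf p q) ` (F \<times> F)"
  have finY: "finite Y" using fin by (simp add: Y_def)
  have "a \<in> complex_span sc Y" for a
  proof -
    have "a = sum (\<lambda>x. x) F * a * sum (\<lambda>x. x) F" using sF by simp
    also have "\<dots> = (\<Sum>p\<in>F. \<Sum>q\<in>F. p * a * q)"
      apply (simp only: sum_distrib_left sum_distrib_right)
      by (rule sum.swap)
    finally have aeq: "a = (\<Sum>p\<in>F. \<Sum>q\<in>F. p * a * q)" .
    have "(\<Sum>p\<in>F. \<Sum>q\<in>F. p * a * q) \<in> complex_span sc Y"
    proof (rule span_sum, rule span_sum)
      fix p q assume pF: "p \<in> F" and qF: "q \<in> F"
      have "p * (p * a * q) = p * a * q" using pr[OF pF] by (simp add: mult.assoc[symmetric])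
      moreover have "(p * a * q) * q = p * a * q" using pr[OF qF] by (simp add: mult.assoc)
      ultimately obtain c where "p * a * q = sc c (yf p q)" using yf[OF pF qF] by blast
      moreover have "yf p q \<in> Y" using pF qF by (auto simp: Y_def)
      ultimately show "p * a * q \<in> complex_span sc Y" using span_elem[OF finY] by simp
    qed
    thus ?thesis using aeq by simp
  qed
  thus ?thesis using finY by blast
qed

end

theorem lemma4p3:
  fixes scaleC :: "complex \<Rightarrow> 'a::{real_normed_algebra_1,banach} \<Rightarrow> 'a"
    and star :: "'a \<Rightarrow> 'a"
    and \<phi> :: "'a \<Rightarrow> complex"
  assumes "unital_cstar_algebra scaleC star"
    and "infinite_dimensional scaleC"
    and "is_state scaleC star \<phi>"
    and "gns_faithful star \<phi>"
  shows "\<not> (\<exists>R::real. R > 0 \<and>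
            (\<forall>a. \<phi> a = 0 \<longrightarrow> norm (star a * a) \<le> R * Re (\<phi> (star a * a))))"
proof
  assume "\<exists>R::real. R > 0 \<and> (\<forall>a. \<phi> a = 0 \<longrightarrow> norm (star a * a) \<le> R * Re (\<phi> (star a * a)))"
  then obtain R where R: "R > 0" "\<forall>a. \<phi> a = 0 \<longrightarrow> norm (star a * a) \<le> R * Re (\<phi> (star a * a))"
    by blast
  interpret cs scaleC star \<phi> using assms(1,3) by unfold_locales
  interpret cs2 scaleC star \<phi> "(sqrt R + 1)^2"
  proof unfold_locales
    have "sqrt R + 1 > 0" using real_sqrt_ge_zero[of R] R(1) by linarith
    thus "(sqrt R + 1)^2 > 0" by simp
    show "(norm a)^2 \<le> (sqrt R + 1)^2 * Re (\<phi> (star a * a))" for a by (rule kbound[OF R])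
  qed
  obtain Y where "finite Y" "\<forall>a. a \<in> complex_span scaleC Y" using fin_dim by blast
  thus False using assms(2) unfolding infinite_dimensional_def by blast
qed

end
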